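(* Let $\mathbb{X}$ be a real Banach space such that $(x,x)$ is a CPP for every $x\in S_{\mathbb{X}}$. Then $\mathbb{X}$ is strictly convex.
   Context: $\mathbb{X}$ has dimension greater than $1$. $B(x,r)=\{u:\|u-x\|<r\}$. $x\perp_B y$ means $\|x+\lambda y\|\ge\|x\|$ for all real $\lambda$; $x^\perp=\{y:x\perp_By\}$. For $x,y\in S_{\mathbb{X}}$, $(x,y)$ is a CPP if there exist $r>0,\mu>0$ such that for all $z\in x^\perp\cap S_{\mathbb{X}}$, all $w\in y^\perp\cap S_{\mathbb{X}}$ and all $a,b\in\mathbb{R}$, $ax+bz\in B(x,r)\cap S_{\mathbb{X}}$ implies $\|ay+b\mu w\|\le1$. *)

theory Defs
  imports "HOL-Analysis.Analysis"
begin

definition bj_orth :: "'a::real_normed_vector \<Rightarrow> 'a \<Rightarrow> bool" where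
  "bj_orth x y \<longleftrightarrow> (\<forall>l::real. norm (x + l *\<^sub>R y) \<ge> norm x)"

definition bj_orth_set :: "'a::real_normed_vector \<Rightarrow> 'a set" where
  "bj_orth_set x = {y. bj_orth x y}"

abbreviation unit_sphere :: "'a::real_normed_vector set" where
  "unit_sphere \<equiv> sphere 0 1"

definition CPP :: "'a::real_normed_vector \<Rightarrow> 'a \<Rightarrow> bool" where
  "CPP x y \<longleftrightarrow> x \<in> unit_sphere \<and> y \<in> unit_sphere \<and>
     (\<exists>r>0. \<exists>\<mu>>0. \<forall>z \<in> bj_orth_set x \<inter> unit_sphere. \<forall>w \<in> bj_orth_set y \<inter> unit_sphere.
        \<forall>a b::real. a *\<^sub>R x + b *\<^sub>R z \<in> ball x r \<inter> unit_sphere \<longrightarrow>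
           norm (a *\<^sub>R y + (b * \<mu>) *\<^sub>R w) \<le> 1)"

definition strictly_convex_space :: "'a::real_normed_vector itself \<Rightarrow> bool" where
  "strictly_convex_space _ \<longleftrightarrow>
     (\<forall>x y::'a. norm x = 1 \<longrightarrow> norm y = 1 \<longrightarrow> x \<noteq> y \<longrightarrow> norm ((1/2) *\<^sub>R (x + y)) < 1)"

end

theory Submission
  imports Defs
begin

lemma conv_aux:
  fixes u d :: "'a::real_normed_vector"
  assumes "0 \<le> th" "th \<le> 1"
  shows "norm (u + (th * s + (1 - th) * t) *\<^sub>R d)
     \<le> th * norm (u + s *\<^sub>R d) + (1 - th) * norm (u + t *\<^sub>R d)"
proof -
  have "u + (th * s + (1 - th) * t) *\<^sub>R d = th *\<^sub>R (u + s *\<^sub>R d) + (1 - th) *\<^sub>R (u + t *\<^sub>R d)"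
    by (simp add: algebra_simps)
  also have "norm \<dots> \<le> norm (th *\<^sub>R (u + s *\<^sub>R d)) + norm ((1 - th) *\<^sub>R (u + t *\<^sub>R d))"
    by (rule norm_triangle_ineq)
  also have "\<dots> = th * norm (u + s *\<^sub>R d) + (1 - th) * norm (u + t *\<^sub>R d)"
    using assms by simp
  finally show ?thesis .
qed

theorem mainTheorem19:
  assumes dim_gt1: "\<not> (\<exists>v::'a::banach. \<forall>x::'a. \<exists>c::real. x = c *\<^sub>R v)"
    and cpp: "\<forall>x::'a. x \<in> sphere 0 1 \<longrightarrow> CPP x x"
  shows "strictly_convex_space TYPE('a)"
proof (rule ccontr)
  assume "\<not> strictly_convex_space TYPE('a)"
  then obtain u v :: 'a where nu: "norm u = 1" and nv: "norm v = 1" and uv: "u \<noteq> v"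
    and mid: "norm ((1/2) *\<^sub>R (u + v)) \<ge> 1"
    unfolding strictly_convex_space_def by force
  define d where "d = v - u"
  define nd where "nd = norm d"
  have nd: "nd > 0" using uv unfolding nd_def d_def by simp
  define g where "g t = norm (u + t *\<^sub>R d)" for t
  have g0: "g 0 = 1" using nu by (simp add: g_def)
  have g1: "g 1 = 1" using nv by (simp add: g_def d_def)
  have gh: "g (1/2) \<ge> 1"
  proof -
    have "u + (1/2) *\<^sub>R d = (1/2) *\<^sub>R (u + v)" by (simp add: d_def algebra_simps flip: scaleR_add_left)
    thus ?thesis using mid by (simp add: g_def)
  qed
  have conv: "g (th * s + (1 - th) * t) \<le> th * g s + (1 - th) * g t"
    if "0 \<le> th" "th \<le> 1" for th s t
    using conv_aux[OF that] by (simp add: g_def)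
  have gge: "g t \<ge> 1" for t
  proof (cases "t < 1/2")
    case True
    define th where "th = (1/2) / (1 - t)"
    have th0: "0 \<le> th" "th \<le> 1" using True by (auto simp: th_def field_simps)
    have "th * (1 - t) = 1/2" using True by (simp add: th_def)
    hence eq: "th * t + (1 - th) * 1 = 1/2" by (simp add: algebra_simps)
    have "g (1/2) \<le> th * g t + (1 - th) * g 1" using conv[OF th0, of t 1, unfolded eq] .
    hence "1 \<le> th * g t + (1 - th)" using gh g1 by simp
    moreover have "th > 0" using True by (simp add: th_def)
    ultimately have "th * 1 \<le> th * g t" "th > 0" by linarith+
    thus ?thesis using mult_le_cancel_left_pos by blast
  next
    case False
    define th where "th = (1/2) / t"
    have th0: "0 \<le> th" "th \<le> 1" using False by (auto simp: th_def field_simps)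
    have "th * t = 1/2" using False by (simp add: th_def)
    hence eq: "th * t + (1 - th) * 0 = 1/2" by simp
    have "g (1/2) \<le> th * g t + (1 - th) * g 0" using conv[OF th0, of t 0, unfolded eq] .
    hence "1 \<le> th * g t + (1 - th)" using gh g0 by simp
    moreover have "th > 0" using False by (simp add: th_def)
    ultimately have "th * 1 \<le> th * g t" "th > 0" by linarith+
    thus ?thesis using mult_le_cancel_left_pos by blast
  qed
  have cont: "continuous_on UNIV g" unfolding g_def by (intro continuous_intros)
  define S where "S = {t. g t \<le> 1}"
  have S0: "1 \<in> S" using g1 by (simp add: S_def)
  have Sbd: "t \<le> 2 / nd" if "t \<in> S" for t
  proof -
    have "norm (t *\<^sub>R d) \<le> norm (u + t *\<^sub>R d) + norm u"
      using norm_triangle_ineq4[of "u + t *\<^sub>R d" u] by simp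
    hence "\<bar>t\<bar> * nd \<le> 2" using that nu by (simp add: S_def g_def nd_def)
    hence "t * nd \<le> 2" by (smt (verit) abs_ge_self mult_right_mono nd)
    thus ?thesis using nd by (simp add: field_simps)
  qed
  have bdd: "bdd_above S" using Sbd by (auto simp: bdd_above_def)
  have Sclosed: "closed S"
    unfolding S_def using closed_Collect_le[OF cont continuous_on_const] by simp
  define T where "T = Sup S"
  have TS: "T \<in> S" unfolding T_def
    using closed_contains_Sup[OF _ bdd Sclosed] S0 by blast
  have T1: "T \<ge> 1" unfolding T_def using cSup_upper[OF S0 bdd] .
  have gT: "g T = 1" using TS gge[of T] by (simp add: S_def)
  have gbig: "g t > 1" if "t > T" for t
  proof (rule ccontr)
    assume "\<not> g t > 1"
    hence "t \<in> S" by (simp add: S_def)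
    hence "t \<le> T" unfolding T_def using cSup_upper[OF _ bdd] by blast
    thus False using that by simp
  qed
  have ginside: "g t \<le> 1" if "0 \<le> t" "t \<le> T" for t
  proof -
    define th where "th = t / T"
    have th0: "0 \<le> th" "th \<le> 1" using that T1 by (auto simp: th_def field_simps)
    have eq: "th * T + (1 - th) * 0 = t" using T1 by (simp add: th_def)
    have "g t \<le> th * g T + (1 - th) * g 0" using conv[OF th0, of T 0, unfolded eq] .
    thus ?thesis using gT g0 by simp
  qed
  define x where "x = u + T *\<^sub>R d"
  have nx: "x \<in> sphere 0 1" using gT by (simp add: x_def g_def)
  obtain r \<mu> where r: "r > 0" and mu: "\<mu> > 0" and H:
    "\<forall>z \<in> bj_orth_set x \<inter> unit_sphere. \<forall>w \<in> bj_orth_set x \<inter> unit_sphere.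
        \<forall>a b::real. a *\<^sub>R x + b *\<^sub>R z \<in> ball x r \<inter> unit_sphere \<longrightarrow>
           norm (a *\<^sub>R x + (b * \<mu>) *\<^sub>R w) \<le> 1"
    using cpp nx unfolding CPP_def by blast
  define z where "z = (- 1 / nd) *\<^sub>R d"
  define w where "w = (1 / nd) *\<^sub>R d"
  have xl: "x + l *\<^sub>R (c *\<^sub>R d) = u + (T + l * c) *\<^sub>R d" for l c
    by (simp add: x_def algebra_simps)
  have orth: "bj_orth x (c *\<^sub>R d)" for c
    unfolding bj_orth_def
  proof
    fix l :: real
    have "norm (x + l *\<^sub>R (c *\<^sub>R d)) = g (T + l * c)" unfolding g_def xl ..
    thus "norm x \<le> norm (x + l *\<^sub>R (c *\<^sub>R d))" using gge nx by simp
  qed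
  have zS: "z \<in> bj_orth_set x \<inter> unit_sphere"
    using nd orth[of "-1/nd"] by (simp add: z_def bj_orth_set_def nd_def)
  have wS: "w \<in> bj_orth_set x \<inter> unit_sphere"
    using nd orth[of "1/nd"] by (simp add: w_def bj_orth_set_def nd_def)
  define b where "b = min (r/2) (T * nd)"
  have b0: "b > 0" using r T1 nd by (simp add: b_def)
  have bT: "b / nd \<le> T" using nd by (simp add: b_def field_simps)
  have "1 *\<^sub>R x + b *\<^sub>R z \<in> ball x r \<inter> unit_sphere"
  proof
    have "dist x (1 *\<^sub>R x + b *\<^sub>R z) = b" using b0 nd by (simp add: z_def dist_norm nd_def)
    thus "1 *\<^sub>R x + b *\<^sub>R z \<in> ball x r" using r by (simp add: b_def)
    have e: "1 *\<^sub>R x + b *\<^sub>R z = u + (T + b * (- 1 / nd)) *\<^sub>R d"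
      using xl[of b "-1/nd"] by (simp add: z_def)
    have "g (T + b * (- 1 / nd)) \<le> 1"
      using ginside[of "T + b * (- 1 / nd)"] bT b0 nd by (simp add: field_simps)
    moreover have "g (T + b * (- 1 / nd)) \<ge> 1" by (rule gge)
    ultimately show "1 *\<^sub>R x + b *\<^sub>R z \<in> unit_sphere" using e by (simp add: g_def)
  qed
  hence le: "norm (1 *\<^sub>R x + (b * \<mu>) *\<^sub>R w) \<le> 1" using H zS wS by blast
  have e2: "1 *\<^sub>R x + (b * \<mu>) *\<^sub>R w = u + (T + (b * \<mu>) * (1 / nd)) *\<^sub>R d"
    using xl[of "b * \<mu>" "1/nd"] by (simp add: w_def)
  have "g (T + (b * \<mu>) * (1 / nd)) > 1" using b0 mu nd by (intro gbig) simp
  thus False using le e2 by (simp add: g_def)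
qed

end
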